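(* Let $\Gamma$ and $\Gamma'$ be triangulations of connected closed $2$-dimensional surfaces $M$ and $M'$, and let $F$ and $F'$ be faces of $\Gamma$ and $\Gamma'$ respectively. For every special homeomorphism $g:\partial F\to\partial F'$, the connected sum $\Gamma\#_g\Gamma'$ is $3$-colorable if and only if both $\Gamma$ and $\Gamma'$ are $3$-colorable.
   Context: A triangulation of a connected closed surface (not necessarily orientable) is a closed $2$-cell embedding of a connected finite simple graph all of whose faces are triangles. A homeomorphism $g:\partial F\to\partial F'$ is special if it maps vertices to vertices. The connected sum $\Gamma\#_g\Gamma'$ is the triangulation of $M\# M'$ obtained from $\Gamma$ and $\Gamma'$ by removing the interiors of $F$ and $F'$ and gluing $\partial F$ to $\partial F'$ via $g$. A graph is $3$-colorable if it admits a proper vertex coloring with $3$ colors. *)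

theory Defs
  imports Main
begin

text \<open>Combinatorial model of a triangulation of a connected closed surface:
  a finite nonempty family of faces T (indices of type 'f), each face f having
  a set fv f of exactly three vertices; every edge (2-subset of a face) lies in
  exactly two faces; around every vertex the faces containing it are connected
  by sharing edges through that vertex (so they form one cyclic disk link);
  and the underlying graph is connected.\<close>

definition verts :: "('f \<Rightarrow> 'a set) \<Rightarrow> 'f set \<Rightarrow> 'a set" where
  "verts fv T = (\<Union>f\<in>T. fv f)"

definition edges_of :: "('f \<Rightarrow> 'a set) \<Rightarrow> 'f set \<Rightarrow> 'a set set" where
  "edges_of fv T = {e. \<exists>f\<in>T. e \<subseteq> fv f \<and> card e = 2}"

definition adj :: "('f \<Rightarrow> 'a set) \<Rightarrow> 'f set \<Rightarrow> 'a \<Rightarrow> 'a \<Rightarrow> bool" where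
  "adj fv T u v \<longleftrightarrow> {u, v} \<in> edges_of fv T"

definition face_adj_at :: "('f \<Rightarrow> 'a set) \<Rightarrow> 'f set \<Rightarrow> 'a \<Rightarrow> 'f \<Rightarrow> 'f \<Rightarrow> bool" where
  "face_adj_at fv T v f f' \<longleftrightarrow> f \<in> T \<and> f' \<in> T \<and> f \<noteq> f' \<and>
     (\<exists>w. w \<noteq> v \<and> {v, w} \<subseteq> fv f \<and> {v, w} \<subseteq> fv f')"

definition is_triangulation :: "('f \<Rightarrow> 'a set) \<Rightarrow> 'f set \<Rightarrow> bool" where
  "is_triangulation fv T \<longleftrightarrow>
     finite T \<and> T \<noteq> {} \<and>
     (\<forall>f\<in>T. card (fv f) = 3) \<and>
     (\<forall>e\<in>edges_of fv T. card {f\<in>T. e \<subseteq> fv f} = 2) \<and>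
     (\<forall>v\<in>verts fv T. \<forall>f\<in>T. \<forall>f'\<in>T. v \<in> fv f \<and> v \<in> fv f' \<longrightarrow> (face_adj_at fv T v)\<^sup>*\<^sup>* f f') \<and>
     (\<forall>u\<in>verts fv T. \<forall>w\<in>verts fv T. (adj fv T)\<^sup>*\<^sup>* u w)"

definition three_colorable :: "('f \<Rightarrow> 'a set) \<Rightarrow> 'f set \<Rightarrow> bool" where
  "three_colorable fv T \<longleftrightarrow>
     (\<exists>c :: 'a \<Rightarrow> nat. (\<forall>v\<in>verts fv T. c v < 3) \<and>
        (\<forall>u v. adj fv T u v \<longrightarrow> c u \<noteq> c v))"

text \<open>Connected sum along faces F, F' via the vertex bijection g (a special
  homeomorphism of the face boundaries is determined, combinatorially, by the
  bijection it induces on the three vertices).\<close>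
definition cs_vmap :: "('g \<Rightarrow> 'b set) \<Rightarrow> 'g \<Rightarrow> 'a set \<Rightarrow> ('a \<Rightarrow> 'b) \<Rightarrow> 'a + 'b \<Rightarrow> 'a + 'b" where
  "cs_vmap fv' F' A g x = (case x of Inl a \<Rightarrow> Inl a
      | Inr b \<Rightarrow> (if b \<in> fv' F' then Inl (inv_into A g b) else Inr b))"

definition cs_fv :: "('f \<Rightarrow> 'a set) \<Rightarrow> ('g \<Rightarrow> 'b set) \<Rightarrow> 'f \<Rightarrow> 'g \<Rightarrow> ('a \<Rightarrow> 'b)
    \<Rightarrow> 'f + 'g \<Rightarrow> ('a + 'b) set" where
  "cs_fv fv fv' F F' g h = (case h of Inl f \<Rightarrow> Inl ` fv f
      | Inr f' \<Rightarrow> cs_vmap fv' F' (fv F) g ` Inr ` fv' f')"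

definition cs_faces :: "'f set \<Rightarrow> 'g set \<Rightarrow> 'f \<Rightarrow> 'g \<Rightarrow> ('f + 'g) set" where
  "cs_faces T T' F F' = Inl ` (T - {F}) \<union> Inr ` (T' - {F'})"

end

theory Submission
  imports Defs
begin

lemma tri_adj:
  assumes "f \<in> T" "u \<in> fv f" "v \<in> fv f" "u \<noteq> v"
  shows "adj fv T u v"
  using assms unfolding adj_def edges_of_def by auto

lemma tri_edge_other:
  assumes "is_triangulation fv T" "F \<in> T" "e \<subseteq> fv F" "card e = 2"
  shows "\<exists>f\<in>T. f \<noteq> F \<and> e \<subseteq> fv f"
proof (rule ccontr)
  assume na: "\<not> ?thesis"
  have "e \<in> edges_of fv T" using assms unfolding edges_of_def by auto
  hence "card {f\<in>T. e \<subseteq> fv f} = 2" using assms(1) unfolding is_triangulation_def by auto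
  moreover have "{f\<in>T. e \<subseteq> fv f} \<subseteq> {F}" using na by auto
  hence "card {f\<in>T. e \<subseteq> fv f} \<le> 1"
    using card_mono[of "{F}"] by fastforce
  ultimately show False by simp
qed

lemma tri_vert_other:
  assumes "is_triangulation fv T" "F \<in> T" "a \<in> verts fv T"
  shows "\<exists>f\<in>T. f \<noteq> F \<and> a \<in> fv f"
proof -
  obtain f where f: "f \<in> T" "a \<in> fv f" using assms(3) unfolding verts_def by auto
  show ?thesis
  proof (cases "f = F")
    case False then show ?thesis using f by auto
  next
    case True
    have c3: "card (fv F) = 3" using assms(1,2) unfolding is_triangulation_def by auto
    have "\<exists>w\<in>fv F. w \<noteq> a"
    proof (rule ccontr)
      assume "\<not> ?thesis"
      hence "fv F \<subseteq> {a}" by auto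
      hence "card (fv F) \<le> 1"
        using card_mono[of "{a}"] by fastforce
      thus False using c3 by simp
    qed
    then obtain w where w: "w \<in> fv F" "w \<noteq> a" by auto
    have "{a, w} \<subseteq> fv F" "card {a, w} = 2" using w f True by auto
    from tri_edge_other[OF assms(1,2) this] show ?thesis by auto
  qed
qed

lemma tri_adj_other:
  assumes "is_triangulation fv T" "F \<in> T" "adj fv T u v"
  shows "\<exists>f\<in>T. f \<noteq> F \<and> u \<in> fv f \<and> v \<in> fv f \<and> u \<noteq> v"
proof -
  obtain f where f: "f \<in> T" "{u,v} \<subseteq> fv f" "card {u,v} = 2"
    using assms(3) unfolding adj_def edges_of_def by auto
  have uv: "u \<noteq> v" using f(3) by (cases "u = v") auto
  show ?thesis
  proof (cases "f = F")
    case False then show ?thesis using f uv by auto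
  next
    case True
    have "{u,v} \<subseteq> fv F" "card {u,v} = 2" using f True by auto
    from tri_edge_other[OF assms(1,2) this] uv show ?thesis by auto
  qed
qed

lemma adj_verts:
  assumes "adj fv T u v" shows "u \<in> verts fv T" "v \<in> verts fv T"
  using assms unfolding adj_def edges_of_def verts_def by auto

theorem lemma3:
  fixes fv :: "'f \<Rightarrow> 'a set" and T :: "'f set" and F :: 'f
    and fv' :: "'g \<Rightarrow> 'b set" and T' :: "'g set" and F' :: 'g
    and g :: "'a \<Rightarrow> 'b"
  assumes "is_triangulation fv T" and "is_triangulation fv' T'"
    and "F \<in> T" and "F' \<in> T'"
    and "bij_betw g (fv F) (fv' F')"
  shows "three_colorable (cs_fv fv fv' F F' g) (cs_faces T T' F F')
     \<longleftrightarrow> three_colorable fv T \<and> three_colorable fv' T'"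
proof -
  let ?m = "cs_vmap fv' F' (fv F) g"
  let ?sv = "cs_fv fv fv' F F' g"
  let ?sT = "cs_faces T T' F F'"
  have injinv: "inj_on (inv_into (fv F) g) (fv' F')"
    using assms(5) by (metis bij_betw_def inj_on_inv_into order_refl)
  have minj: "u \<noteq> v \<Longrightarrow> ?m (Inr u) \<noteq> ?m (Inr v)" for u v
    using injinv unfolding cs_vmap_def inj_on_def by auto
  have sadj: "adj ?sv ?sT x y" if "h \<in> ?sT" "x \<in> ?sv h" "y \<in> ?sv h" "x \<noteq> y" for h x y
    using tri_adj[of h ?sT x ?sv y] that by blast
  show ?thesis
  proof
    assume "three_colorable ?sv ?sT"
    then obtain C :: "'a + 'b \<Rightarrow> nat" where C: "\<forall>v\<in>verts ?sv ?sT. C v < 3"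
      "\<forall>u v. adj ?sv ?sT u v \<longrightarrow> C u \<noteq> C v" unfolding three_colorable_def by auto
    have "three_colorable fv T"
      unfolding three_colorable_def
    proof (intro exI[of _ "\<lambda>a. C (Inl a)"] conjI allI impI ballI)
      fix a assume "a \<in> verts fv T"
      from tri_vert_other[OF assms(1,3) this] obtain f where "f \<in> T" "f \<noteq> F" "a \<in> fv f" by auto
      hence "Inl a \<in> verts ?sv ?sT" unfolding verts_def cs_faces_def cs_fv_def by force
      thus "C (Inl a) < 3" using C by auto
    next
      fix u v assume "adj fv T u v"
      from tri_adj_other[OF assms(1,3) this] obtain f where f: "f \<in> T" "f \<noteq> F" "u \<in> fv f" "v \<in> fv f" "u \<noteq> v" by auto
      have "adj ?sv ?sT (Inl u) (Inl v)"
        by (rule sadj[of "Inl f"]) (use f in \<open>auto simp: cs_faces_def cs_fv_def\<close>)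
      thus "C (Inl u) \<noteq> C (Inl v)" using C by auto
    qed
    moreover have "three_colorable fv' T'"
      unfolding three_colorable_def
    proof (intro exI[of _ "\<lambda>b. C (?m (Inr b))"] conjI allI impI ballI)
      fix a assume "a \<in> verts fv' T'"
      from tri_vert_other[OF assms(2,4) this] obtain f where "f \<in> T'" "f \<noteq> F'" "a \<in> fv' f" by auto
      hence "?m (Inr a) \<in> verts ?sv ?sT" unfolding verts_def cs_faces_def cs_fv_def by force
      thus "C (?m (Inr a)) < 3" using C by auto
    next
      fix u v assume "adj fv' T' u v"
      from tri_adj_other[OF assms(2,4) this] obtain f where f: "f \<in> T'" "f \<noteq> F'" "u \<in> fv' f" "v \<in> fv' f" "u \<noteq> v" by auto
      have "adj ?sv ?sT (?m (Inr u)) (?m (Inr v))"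
        by (rule sadj[of "Inr f"]) (use f minj in \<open>auto simp: cs_faces_def cs_fv_def\<close>)
      thus "C (?m (Inr u)) \<noteq> C (?m (Inr v))" using C by auto
    qed
    ultimately show "three_colorable fv T \<and> three_colorable fv' T'" by simp
  next
    assume "three_colorable fv T \<and> three_colorable fv' T'"
    then obtain c :: "'a \<Rightarrow> nat" and c' :: "'b \<Rightarrow> nat" where
      c: "\<forall>v\<in>verts fv T. c v < 3" "\<forall>u v. adj fv T u v \<longrightarrow> c u \<noteq> c v" and
      c': "\<forall>v\<in>verts fv' T'. c' v < 3" "\<forall>u v. adj fv' T' u v \<longrightarrow> c' u \<noteq> c' v"
      unfolding three_colorable_def by blast
    have FT: "fv F \<subseteq> verts fv T" using assms(3) unfolding verts_def by auto
    have FT': "fv' F' \<subseteq> verts fv' T'" using assms(4) unfolding verts_def by auto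
    have c3: "card (fv' F') = 3" using assms(2,4) unfolding is_triangulation_def by auto
    have cinj: "inj_on c' (fv' F')"
      unfolding inj_on_def using c'(2) tri_adj[OF assms(4), of _ fv'] by blast
    have img: "c' ` fv' F' = {..<3}"
    proof (rule card_subset_eq)
      show "c' ` fv' F' \<subseteq> {..<3}" using c'(1) FT' by auto
      show "card (c' ` fv' F') = card {..<3::nat}" using card_image[OF cinj] c3 by simp
    qed simp
    define c'' where "c'' b = c (inv_into (fv F) g (inv_into (fv' F') c' (c' b)))" for b
    have b0: "inv_into (fv' F') c' (c' b) \<in> fv' F'" "c' (inv_into (fv' F') c' (c' b)) = c' b"
      if "b \<in> verts fv' T'" for b
    proof -
      have "c' b \<in> c' ` fv' F'" using img c'(1) that by auto
      thus "inv_into (fv' F') c' (c' b) \<in> fv' F'" "c' (inv_into (fv' F') c' (c' b)) = c' b"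
        by (auto intro: inv_into_into f_inv_into_f)
    qed
    have ginv: "inv_into (fv F) g b \<in> fv F" if "b \<in> fv' F'" for b
      using assms(5) that by (metis bij_betw_def inv_into_into)
    have c''3: "c'' b < 3" if "b \<in> verts fv' T'" for b
      unfolding c''_def using c(1) FT ginv b0[OF that] by blast
    have c''F: "c'' b = c (inv_into (fv F) g b)" if "b \<in> fv' F'" for b
      unfolding c''_def using inv_into_f_f[OF cinj that] by simp
    have c''adj: "c'' u \<noteq> c'' v" if "adj fv' T' u v" for u v
    proof -
      have uv: "u \<in> verts fv' T'" "v \<in> verts fv' T'" using adj_verts[OF that] by auto
      let ?u = "inv_into (fv' F') c' (c' u)" and ?v = "inv_into (fv' F') c' (c' v)"
      have "?u \<noteq> ?v" using b0[OF uv(1)] b0[OF uv(2)] c'(2) that by metis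
      hence "inv_into (fv F) g ?u \<noteq> inv_into (fv F) g ?v"
        using injinv b0[OF uv(1)] b0[OF uv(2)] unfolding inj_on_def by metis
      thus ?thesis unfolding c''_def using c(2) tri_adj[OF assms(3), of _ fv] ginv b0[OF uv(1)] b0[OF uv(2)]
        by blast
    qed
    define C where "C x = (case x of Inl a \<Rightarrow> c a | Inr b \<Rightarrow> c'' b)" for x
    have Cm: "C (?m (Inr b)) = c'' b" for b
      using c''F unfolding C_def cs_vmap_def by auto
    show "three_colorable ?sv ?sT"
      unfolding three_colorable_def
    proof (intro exI[of _ C] conjI allI impI ballI)
      fix x assume "x \<in> verts ?sv ?sT"
      then obtain h where h: "h \<in> ?sT" "x \<in> ?sv h" unfolding verts_def by auto
      show "C x < 3"
      proof (cases h)
        case (Inl f)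
        then show ?thesis using h c(1) unfolding cs_faces_def cs_fv_def verts_def C_def by auto
      next
        case (Inr f)
        then obtain b where "b \<in> fv' f" "f \<in> T'" "x = ?m (Inr b)"
          using h unfolding cs_faces_def cs_fv_def by auto
        moreover hence "b \<in> verts fv' T'" unfolding verts_def by auto
        ultimately show ?thesis using Cm c''3 by auto
      qed
    next
      fix x y assume "adj ?sv ?sT x y"
      then obtain h where h: "h \<in> ?sT" "{x,y} \<subseteq> ?sv h" "card {x,y} = 2"
        unfolding adj_def edges_of_def by auto
      have xy: "x \<noteq> y" using h(3) by (cases "x = y") auto
      show "C x \<noteq> C y"
      proof (cases h)
        case (Inl f)
        then obtain a a' where "x = Inl a" "y = Inl a'" "a \<in> fv f" "a' \<in> fv f" "f \<in> T"
          using h unfolding cs_faces_def cs_fv_def by auto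
        then show ?thesis using xy c(2) tri_adj[of f T a fv a'] unfolding C_def by auto
      next
        case (Inr f)
        then obtain a a' where "x = ?m (Inr a)" "y = ?m (Inr a')" "a \<in> fv' f" "a' \<in> fv' f" "f \<in> T'"
          using h unfolding cs_faces_def cs_fv_def by auto
        then show ?thesis using xy c''adj tri_adj[of f T' a fv' a'] Cm by metis
      qed
    qed
  qed
qed

end
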